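(* Every pair of different words $x,y$ over a finite alphabet can be separated exactly by a 2-state AfA.
   Context: An $n$-state affine finite automaton (AfA) over a finite alphabet $\Sigma$ consists of real $n\times n$ matrices $A_\sigma$ for $\sigma\in\Sigma\cup\{\$\}$ ($\$$ a right end-marker), each of whose columns sums to $1$; an initial vector $v_0\in\mathbb{R}^n$ with entries summing to $1$; and a set $E_a$ of accepting states. On input $w=w_1\cdots w_k$ the final vector is $v_f=A_\$A_{w_k}\cdots A_{w_1}v_0$, and $w$ is accepted with probability $\sum_{j\in E_a}|v_f[j]|\big/\sum_{j=1}^n|v_f[j]|$. A pair is separated exactly if one word is accepted with probability $1$ and the other with probability $0$. *)

theory Defs
  imports "HOL-Analysis.Analysis"
begin

definition affine_matrix :: "real^'n::finite^'n \<Rightarrow> bool" where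
  "affine_matrix M \<longleftrightarrow> (\<forall>j. (\<Sum>i\<in>UNIV. M $ i $ j) = 1)"

definition affine_vector :: "real^'n::finite \<Rightarrow> bool" where
  "affine_vector v \<longleftrightarrow> (\<Sum>i\<in>UNIV. v $ i) = 1"

definition is_AfA :: "'a set \<Rightarrow> ('a \<Rightarrow> real^'n::finite^'n) \<Rightarrow> real^'n^'n \<Rightarrow> real^'n \<Rightarrow> bool" where
  "is_AfA Sig A Aend v0 \<longleftrightarrow>
     (\<forall>\<sigma>\<in>Sig. affine_matrix (A \<sigma>)) \<and> affine_matrix Aend \<and> affine_vector v0"

definition final_vec :: "('a \<Rightarrow> real^'n::finite^'n) \<Rightarrow> real^'n^'n \<Rightarrow> real^'n \<Rightarrow> 'a list \<Rightarrow> real^'n" where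
  "final_vec A Aend v0 w = Aend *v (foldl (\<lambda>v \<sigma>. A \<sigma> *v v) v0 w)"

definition accept_prob :: "('a \<Rightarrow> real^'n::finite^'n) \<Rightarrow> real^'n^'n \<Rightarrow> real^'n \<Rightarrow> 'n set \<Rightarrow> 'a list \<Rightarrow> real" where
  "accept_prob A Aend v0 E w =
     (let vf = final_vec A Aend v0 w in
       (\<Sum>j\<in>E. \<bar>vf $ j\<bar>) / (\<Sum>j\<in>UNIV. \<bar>vf $ j\<bar>))"

definition separates_exactly :: "('a \<Rightarrow> real^'n::finite^'n) \<Rightarrow> real^'n^'n \<Rightarrow> real^'n \<Rightarrow> 'n set \<Rightarrow> 'a list \<Rightarrow> 'a list \<Rightarrow> bool" where
  "separates_exactly A Aend v0 E x y \<longleftrightarrow>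
     (accept_prob A Aend v0 E x = 1 \<and> accept_prob A Aend v0 E y = 0) \<or>
     (accept_prob A Aend v0 E x = 0 \<and> accept_prob A Aend v0 E y = 1)"

end

theory Submission
  imports Defs
begin

definition aff :: "real \<Rightarrow> real \<Rightarrow> real^2^2" where
  "aff a b = vector [vector [a+b, b], vector [1-a-b, 1-b]]"

lemma aff_affine: "affine_matrix (aff a b)"
  unfolding affine_matrix_def aff_def
  by (auto simp: sum_2 forall_2)

lemma aff_mult: "aff a b *v vector [t, 1-t] = vector [a*t+b, 1-(a*t+b)]"
  unfolding aff_def
  by (auto simp: vec_eq_iff forall_2 matrix_vector_mult_def sum_2 algebra_simps)

definition valn :: "('a \<Rightarrow> nat) \<Rightarrow> nat \<Rightarrow> 'a list \<Rightarrow> nat" where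
  "valn d B w = foldl (\<lambda>n s. n * B + d s) 0 w"

lemma valn_snoc: "valn d B (w @ [s]) = valn d B w * B + d s"
  by (simp add: valn_def)

lemma valn_Nil: "valn d B [] = 0" by (simp add: valn_def)

lemma valn_inj:
  assumes "\<forall>s\<in>S. 0 < d s \<and> d s < B" "inj_on d S"
  shows "u \<in> lists S \<Longrightarrow> v \<in> lists S \<Longrightarrow> valn d B u = valn d B v \<Longrightarrow> u = v"
proof (induction u arbitrary: v rule: rev_induct)
  case Nil
  then show ?case
    using assms by (cases v rule: rev_exhaust) (auto simp: valn_snoc valn_Nil)
next
  case (snoc a u)
  show ?case
  proof (cases v rule: rev_exhaust)
    case Nil then show ?thesis using snoc assms by (auto simp: valn_snoc valn_Nil)
  next
    case (snoc v' b)
    have ab: "a \<in> S" "b \<in> S" "u \<in> lists S" "v' \<in> lists S" using snoc snoc.prems by auto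
    have eq: "valn d B u * B + d a = valn d B v' * B + d b"
      using snoc.prems snoc by (simp add: valn_snoc)
    have "(valn d B u * B + d a) mod B = d a" using assms ab by simp
    moreover have "(valn d B v' * B + d b) mod B = d b" using assms ab by simp
    ultimately have "d a = d b" using eq by simp
    hence "a = b" using assms(2) ab by (auto dest: inj_onD)
    moreover have "valn d B u = valn d B v'" using eq \<open>d a = d b\<close> assms ab by auto
    ultimately show ?thesis using snoc.IH ab snoc by auto
  qed
qed

lemma fold_aff:
  "foldl (\<lambda>v s. aff (real B) (real (d s)) *v v) (vector [t, 1-t]) w
     = vector [foldl (\<lambda>t s. real B * t + real (d s)) t w,
               1 - foldl (\<lambda>t s. real B * t + real (d s)) t w]"
  by (induction w arbitrary: t) (auto simp: aff_mult)

lemma foldl_real: "foldl (\<lambda>t s. real B * t + real (d s)) (real n) w = real (foldl (\<lambda>n s. n * B + d s) n w)"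
proof (induction w arbitrary: n)
  case (Cons a w)
  have "real B * real n + real (d a) = real (n * B + d a)" by simp
  then show ?case using Cons.IH[of "n * B + d a"] by (simp add: mult.commute)
qed simp

theorem mainTheorem9:
  fixes Sig :: "'a set" and x y :: "'a list"
  assumes "finite Sig" and "x \<in> lists Sig" and "y \<in> lists Sig" and "x \<noteq> y"
  shows "\<exists>(A :: 'a \<Rightarrow> real^2^2) (Aend :: real^2^2) (v0 :: real^2) (E :: 2 set).
           is_AfA Sig A Aend v0 \<and> separates_exactly A Aend v0 E x y"
proof -
  define S where "S = set x \<union> set y"
  obtain f n where f: "f ` S = {i::nat. i < n}" "inj_on f S"
    using finite_imp_inj_to_nat_seg[of S] unfolding S_def by auto
  define d where "d s = f s + 1" for s
  define B where "B = n + 2"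
  have dB: "\<forall>s\<in>S. 0 < d s \<and> d s < B"
  proof
    fix s assume "s \<in> S" then have "f s < n" using f(1) by blast
    then show "0 < d s \<and> d s < B" unfolding d_def B_def by simp
  qed
  have dinj: "inj_on d S" using f(2) unfolding d_def inj_on_def by auto
  have xy: "x \<in> lists S" "y \<in> lists S" unfolding S_def by auto
  define vx where "vx = real (valn d B x)"
  define vy where "vy = real (valn d B y)"
  have ne: "vx \<noteq> vy" using valn_inj[OF dB dinj xy] assms(4) unfolding vx_def vy_def by auto
  define A where "A s = aff (real B) (real (d s))" for s
  define al where "al = 1 / (vx - vy)"
  define be where "be = - vy / (vx - vy)"
  define Aend where "Aend = aff al be"
  define v0 :: "real^2" where "v0 = vector [0, 1 - 0]"
  have fv: "final_vec A Aend v0 w = vector [al * real (valn d B w) + be, 1 - (al * real (valn d B w) + be)]" for w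
    unfolding final_vec_def A_def v0_def Aend_def
    using fold_aff[of B d 0 w] foldl_real[of B d 0 w]
    by (simp add: aff_mult valn_def)
  have ne': "vx - vy \<noteq> 0" using ne by simp
  have fx: "al * vx + be = 1" using ne' unfolding al_def be_def by (simp add: divide_simps)
  have fy: "al * vy + be = 0" using ne' unfolding al_def be_def by (simp add: divide_simps)
  have "accept_prob A Aend v0 {1} x = 1"
    unfolding accept_prob_def Let_def fv using fx unfolding vx_def by (simp add: sum_2)
  moreover have "accept_prob A Aend v0 {1} y = 0"
    unfolding accept_prob_def Let_def fv using fy unfolding vy_def by (simp add: sum_2)
  moreover have "is_AfA Sig A Aend v0"
    unfolding is_AfA_def A_def Aend_def v0_def affine_vector_def
    by (simp add: aff_affine sum_2)
  ultimately show ?thesis unfolding separates_exactly_def by blast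
qed

end
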